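(* Let $k\ge 2$ and $l=2^{k-1}$. Then: (a),(b) the sequence $(d_n(k))_{n\ge k+1}$ is periodic with least period exactly $l$, i.e. $d_{n+l}(k)=d_n(k)$ for all $n\ge k+1$ and no smaller positive integer has this property; (c) $d_{n+l/2}(k)-d_n(k)\in\{5,-5\}$ for all $n\ge k+1$; (d) for each digit $j\in\{0,\dots,9\}$, the number of indices $i\in\{k+1,k+2,\dots,k+l\}$ with $d_i(k)=j$ equals the $j$-th component of the vector $A^{k-1}u\in\mathbb{Z}^{10}$, where components are indexed $0,\dots,9$, $A$ is the $10\times10$ matrix with rows and columns indexed by $0,\dots,9$ given by $A_{ij}=1$ if $\lfloor j/2\rfloor\equiv i\pmod 5$ and $A_{ij}=0$ otherwise (so row $i$ has ones exactly in columns $2(i\bmod 5)$ and $2(i\bmod 5)+1$), and $u$ is the vector whose component $2$ equals $1$ and all other components equal $0$.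
   Context: For integers $n\ge0$ and $k\ge0$, $d_n(k)\in\{0,\dots,9\}$ denotes the $k$-th decimal digit of $5^n$ counted from the right starting at $k=0$, i.e. $5^n=\sum_{k\ge0} d_n(k)10^k$ (with $d_n(k)=0$ for $k$ beyond the length of $5^n$). *)

theory Defs
  imports Main
begin

definition d :: "nat \<Rightarrow> nat \<Rightarrow> nat" where
  "d n k = (5 ^ n div 10 ^ k) mod 10"

definition matA :: "nat \<Rightarrow> nat \<Rightarrow> int" where
  "matA i j = (if (j div 2) mod 5 = i mod 5 then 1 else 0)"

definition matvec :: "(nat \<Rightarrow> nat \<Rightarrow> int) \<Rightarrow> (nat \<Rightarrow> int) \<Rightarrow> (nat \<Rightarrow> int)" where
  "matvec M v = (\<lambda>i. \<Sum>j<10. M i j * v j)"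

definition vecU :: "nat \<Rightarrow> int" where
  "vecU j = (if j = 2 then 1 else 0)"

end

theory Submission
  imports Defs "HOL-Computational_Algebra.Primes"
begin

lemma five_pow2: "\<exists>t. odd t \<and> (5::nat)^(2^j) = 1 + 2^(j+2)*t"
proof (induction j)
  case 0 show ?case by (rule exI[of _ 1]) simp
next
  case (Suc j)
  then obtain t where t: "odd t" "(5::nat)^(2^j) = 1 + 2^(j+2)*t" by blast
  have "(5::nat)^(2^(Suc j)) = (5^(2^j))^2" by (simp add: power_mult[symmetric] mult.commute)
  also have "\<dots> = 1 + 2^(Suc j+2)*(t + 2^(j+1)*t^2)"
    unfolding t(2) by (simp add: power_add power2_eq_square algebra_simps)
  finally show ?case using t(1) by (intro exI[of _ "t + 2^(j+1)*t^2"]) simp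
qed

lemma d_lt: "d n k < 10" by (simp add: d_def)

lemma half_shift:
  assumes "k \<ge> 2" "n \<ge> k+1"
  shows "d (n + 2^(k-2)) k = (d n k + 5) mod 10"
proof -
  obtain t where t: "odd t" "(5::nat)^(2^(k-2)) = 1 + 2^k*t"
  proof -
    obtain m where m: "k = m+2" using assms(1) le_Suc_ex by (metis add.commute)
    obtain t where t: "odd t" "(5::nat)^(2^m) = 1 + 2^(m+2)*t" using five_pow2[of m] by blast
    have km: "k - 2 = m" "m + 2 = k" by (simp_all add: m)
    show ?thesis by (rule that[of t]) (use t km in \<open>simp_all only: not_False_eq_True\<close>)
  qed
  define Q where "Q = 5^(n-k)*(t::nat)"
  have nk: "n = k + (n-k)" using assms by simp
  have e: "(5::nat)^(n + 2^(k-2)) = 5^n + 10^k * Q"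
  proof -
    have "(5::nat)^(n + 2^(k-2)) = 5^n + 5^n*2^k*t" by (simp add: power_add t(2) algebra_simps)
    also have "5^n*2^k*t = (5::nat)^k*5^(n-k)*2^k*t" by (subst nk) (simp add: power_add)
    also have "\<dots> = 10^k * Q" by (simp add: Q_def power_mult_distrib[symmetric])
    finally show ?thesis .
  qed
  have "Q mod 10 = 5"
  proof -
    have "odd Q" using t(1) by (simp add: Q_def)
    moreover have "5 dvd Q" using assms by (simp add: Q_def)
    ultimately show ?thesis by presburger
  qed
  have "(5^n + 10^k*Q) div 10^k = 5^n div 10^k + Q" by simp
  then have "d (n + 2^(k-2)) k = (5^n div 10^k + Q) mod 10" unfolding d_def e by (simp only:)
  also have "\<dots> = ((5^n div 10^k) mod 10 + Q mod 10) mod 10" by (rule mod_add_eq[symmetric])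
  finally show ?thesis unfolding d_def using \<open>Q mod 10 = 5\<close> by (simp add: add.commute)
qed

lemma half_shift': "k \<ge> 2 \<Longrightarrow> n \<ge> k+1 \<Longrightarrow> d (n + 2^(k-1) div 2) k = (d n k + 5) mod 10"
proof -
  assume a: "k \<ge> 2" "n \<ge> k+1"
  obtain m where m: "k = m+2" using a(1) le_Suc_ex by (metis add.commute)
  have "2^(k-1) div 2 = (2::nat)^(k-2)" by (simp add: m)
  then show ?thesis using half_shift[OF a] by simp
qed

lemma full_period: "k \<ge> 2 \<Longrightarrow> n \<ge> k+1 \<Longrightarrow> d (n + 2^(k-1)) k = d n k"
proof -
  assume a: "k \<ge> 2" "n \<ge> k+1"
  obtain m where m: "k = m+2" using a(1) le_Suc_ex by (metis add.commute)
  have h: "(2::nat)^(k-1) = 2^(k-2) + 2^(k-2)" by (simp add: m)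
  have "d (n + 2^(k-1)) k = d ((n + 2^(k-2)) + 2^(k-2)) k" by (simp only: h add.assoc)
  also have "\<dots> = (d (n + 2^(k-2)) k + 5) mod 10" using a by (intro half_shift) auto
  also have "\<dots> = d n k" using half_shift[OF a] d_lt[of n k] by presburger
  finally show ?thesis .
qed

definition per :: "nat \<Rightarrow> nat \<Rightarrow> bool" where
  "per k p = (\<forall>n\<ge>k+1. d (n + p) k = d n k)"

lemma per_add: "per k a \<Longrightarrow> per k b \<Longrightarrow> per k (a+b)"
  unfolding per_def by (metis add.assoc le_add1 order_trans)

lemma per_mult: "per k a \<Longrightarrow> per k (c*a)"
  by (induction c) (auto simp: per_def[of k 0] intro: per_add)

lemma per_sub: "per k q \<Longrightarrow> per k (q+r) \<Longrightarrow> per k r"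
  unfolding per_def
proof (intro allI impI)
  fix n assume "\<forall>n\<ge>k + 1. d (n + q) k = d n k" "\<forall>n\<ge>k + 1. d (n + (q + r)) k = d n k" "k+1 \<le> n"
  then show "d (n + r) k = d n k" by (metis add.commute add.left_commute le_add2 order_trans)
qed

lemma split10: "(j::nat) < 10 \<Longrightarrow> j = 0 \<or> j = 1 \<or> j = 2 \<or> j = 3 \<or> j = 4 \<or> j = 5 \<or> j = 6 \<or> j = 7 \<or> j = 8 \<or> j = 9" by arith
lemma a3: "(x::nat) < 10 \<Longrightarrow> \<not>(x = j \<and> (x+5) mod 10 = j)" by (drule split10, elim disjE; auto)
lemma a2: "(x::nat) < 10 \<Longrightarrow> j < 10 \<Longrightarrow> (x = j \<or> (x+5) mod 10 = j) \<longleftrightarrow> x mod 5 = j mod 5"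
  apply (frule split10[of x])
  apply (frule split10[of j])
  by (elim disjE; simp)
lemma a4: "(y::nat) div 2 = c \<longleftrightarrow> y = 2*c \<or> y = 2*c+1" by arith
lemma s10: "{..<10::nat} = {0,1,2,3,4,5,6,7,8,9}" by (auto dest: split10)
lemma a5: "(x::nat) mod 10 mod 5 = x mod 5" by (rule mod_mod_cancel) simp
lemma a1: "((y::nat) div 2) mod 5 = (y mod 10) div 2" by presburger

lemma digit_shift: "d (Suc n) (Suc k) mod 5 = d n k div 2"
proof -
  have "(5::nat)^(Suc n) div 10^(Suc k) = (5^n div 10^k) div 2"
  proof -
    have "(5::nat)^(Suc n) div 10^(Suc k) = (5*5^n) div (5*(2*10^k))" by simp
    also have "\<dots> = 5^n div (10^k*2)" by (simp only: div_mult_mult1) (simp add: mult.commute)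
    finally show ?thesis by (simp add: div_mult2_eq)
  qed
  then show ?thesis unfolding d_def by (simp add: a1 a5)
qed

lemma matvec_A: "j < 10 \<Longrightarrow> matvec matA v j = v (2*(j mod 5)) + v (2*(j mod 5)+1)"
  unfolding matvec_def matA_def s10 by (drule split10, elim disjE; simp)

lemma card_sum: "finite A \<Longrightarrow> card {i\<in>A. P i} = (\<Sum>i\<in>A. if P i then 1 else 0::nat)"
  by (simp add: sum.If_cases Int_def conj_commute)

lemma pw_arith: "(P \<or> Q \<longleftrightarrow> R) \<Longrightarrow> (R \<longleftrightarrow> S \<or> T) \<Longrightarrow> \<not>(P\<and>Q) \<Longrightarrow> \<not>(S \<and> T) \<Longrightarrow>
  (if P then 1 else 0::nat) + (if Q then 1 else 0) = (if S then 1 else 0) + (if T then 1 else 0)"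
  by auto

lemma pointwise:
  assumes "k \<ge> 1" "n \<ge> k+2" "j < 10"
  shows "(if d n (Suc k) = j then 1 else 0::nat) + (if d (n + 2^(k-1)) (Suc k) = j then 1 else 0)
       = (if d (n-1) k = 2*(j mod 5) then 1 else 0) + (if d (n-1) k = 2*(j mod 5)+1 then 1 else 0)"
proof -
  have e1: "d (n + 2^(k-1)) (Suc k) = (d n (Suc k) + 5) mod 10"
    using half_shift[of "Suc k" n] assms by simp
  have e2: "d n (Suc k) mod 5 = d (n-1) k div 2"
    using digit_shift[of "n-1" k] assms by simp
  have l: "(d n (Suc k) = j \<or> (d n (Suc k)+5) mod 10 = j) \<longleftrightarrow> d (n-1) k div 2 = j mod 5"
    using a2[OF d_lt assms(3)] e2 by simp
  have r: "d (n-1) k div 2 = j mod 5 \<longleftrightarrow> d (n-1) k = 2*(j mod 5) \<or> d (n-1) k = 2*(j mod 5)+1"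
    by (rule a4)
  show ?thesis unfolding e1 by (rule pw_arith[OF l r a3[OF d_lt]]) simp
qed

lemma cnt_step:
  assumes "k \<ge> 1" "j < 10"
  shows "card {i \<in> {Suc k+1..Suc k + 2^(Suc k-1)}. d i (Suc k) = j}
       = card {i \<in> {k+1..k + 2^(k-1)}. d i k = 2*(j mod 5)} + card {i \<in> {k+1..k + 2^(k-1)}. d i k = 2*(j mod 5)+1}"
proof -
  define h where "h = (2::nat)^(k-1)"
  have hh: "(2::nat)^(Suc k - 1) = h + h"
  proof -
    obtain k' where "k = Suc k'" using assms(1) by (cases k) auto
    then show ?thesis unfolding h_def by (simp add: mult_2)
  qed
  define F where "F n = (if d n (Suc k) = j then 1 else 0::nat)" for n
  define G where "G m = (if d m k = 2*(j mod 5) then 1 else 0::nat) + (if d m k = 2*(j mod 5)+1 then 1 else 0)" for m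
  have "card {i \<in> {Suc k+1..Suc k + 2^(Suc k-1)}. d i (Suc k) = j} = (\<Sum>n\<in>{k+2..k+1+h+h}. F n)"
  proof -
    have "{Suc k+1..Suc k + 2^(Suc k-1)} = {k+2..k+1+h+h}" unfolding hh by simp
    then show ?thesis by (simp only: card_sum[OF finite_atLeastAtMost] F_def)
  qed
  also have "\<dots> = (\<Sum>n\<in>{k+2..k+1+h}. F n) + (\<Sum>n\<in>{k+1+h+1..k+1+h+h}. F n)"
    using sum.ub_add_nat[of "k+2" "k+1+h" F h] by (simp add: add.assoc)
  also have "(\<Sum>n\<in>{k+1+h+1..k+1+h+h}. F n) = (\<Sum>n\<in>{k+2..k+1+h}. F (n+h))"
    using sum.shift_bounds_cl_nat_ivl[of F "k+2" h "k+1+h"] by (simp add: ac_simps)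
  also have "(\<Sum>n\<in>{k+2..k+1+h}. F n) + (\<Sum>n\<in>{k+2..k+1+h}. F (n+h)) = (\<Sum>n\<in>{k+2..k+1+h}. F n + F (n+h))"
    by (simp add: sum.distrib)
  also have "\<dots> = (\<Sum>n\<in>{k+2..k+1+h}. G (n-1))"
    by (rule sum.cong) (use pointwise[OF assms(1) _ assms(2)] in \<open>auto simp: F_def G_def h_def\<close>)
  also have "\<dots> = (\<Sum>n\<in>{Suc (k+1)..Suc (k+h)}. G (n-1))" by simp
  also have "\<dots> = (\<Sum>n\<in>{k+1..k+h}. G n)"
    by (subst sum.shift_bounds_cl_Suc_ivl) simp
  also have "\<dots> = card {i \<in> {k+1..k + 2^(k-1)}. d i k = 2*(j mod 5)} + card {i \<in> {k+1..k + 2^(k-1)}. d i k = 2*(j mod 5)+1}"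
    by (simp only: G_def sum.distrib card_sum[OF finite_atLeastAtMost] h_def)
  finally show ?thesis .
qed

lemma cnt_all:
  assumes "k \<ge> 1"
  shows "\<forall>j<10. int (card {i \<in> {k+1..k + 2^(k-1)}. d i k = j}) = ((matvec matA ^^ (k-1)) vecU) j"
  using assms
proof (induction k rule: dec_induct)
  case base
  have "d (Suc (Suc 0)) (Suc 0) = 2" "d 2 (Suc 0) = 2" by (simp_all add: d_def)
  then have "{i \<in> {1+1..1 + 2^(1-1)}. d i 1 = j} = (if j = 2 then {2} else {})" for j
    by auto
  then show ?case by (simp add: vecU_def)
next
  case (step k)
  show ?case
  proof (intro allI impI)
    fix j :: nat assume j: "j < 10"
    have fp: "(matvec matA ^^ (Suc k - 1)) vecU = matvec matA ((matvec matA ^^ (k-1)) vecU)"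
      using step(1) by (cases k) auto
    have a: "2*(j mod 5) < 10" "2*(j mod 5)+1 < 10" by auto
    show "int (card {i \<in> {Suc k+1..Suc k + 2^(Suc k-1)}. d i (Suc k) = j}) = ((matvec matA ^^ (Suc k-1)) vecU) j"
      unfolding cnt_step[OF step(1) j] fp matvec_A[OF j]
      using step(3) a by simp
  qed
qed

theorem theorem10p2:
  fixes k :: nat
  assumes "k \<ge> 2"
  shows "(\<forall>n\<ge>k+1. d (n + 2^(k-1)) k = d n k)
    \<and> (\<forall>p. 0 < p \<and> p < 2^(k-1) \<longrightarrow> \<not> (\<forall>n\<ge>k+1. d (n + p) k = d n k))
    \<and> (\<forall>n\<ge>k+1. int (d (n + 2^(k-1) div 2) k) - int (d n k) \<in> {5, -5})
    \<and> (\<forall>j<10. int (card {i \<in> {k+1..k + 2^(k-1)}. d i k = j}) = ((matvec matA ^^ (k-1)) vecU) j)"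
proof (intro conjI)
  show A: "\<forall>n\<ge>k+1. d (n + 2^(k-1)) k = d n k" using full_period[OF assms] by blast
  show "\<forall>n\<ge>k+1. int (d (n + 2^(k-1) div 2) k) - int (d n k) \<in> {5, -5}"
  proof (intro allI impI)
    fix n assume n: "n \<ge> k+1"
    show "int (d (n + 2^(k-1) div 2) k) - int (d n k) \<in> {5, -5}"
    proof -
      have "(d n k + 5) mod 10 = (if d n k < 5 then d n k + 5 else d n k - 5)"
        using d_lt[of n k] by arith
      then show ?thesis unfolding half_shift'[OF assms n] by auto
    qed
  qed
  show "\<forall>j<10. int (card {i \<in> {k+1..k + 2^(k-1)}. d i k = j}) = ((matvec matA ^^ (k-1)) vecU) j"
    using cnt_all assms by simp
  show "\<forall>p. 0 < p \<and> p < 2^(k-1) \<longrightarrow> \<not> (\<forall>n\<ge>k+1. d (n + p) k = d n k)"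
  proof (intro allI impI notI)
    fix p assume p: "0 < p \<and> p < 2^(k-1)" and P: "\<forall>n\<ge>k+1. d (n + p) k = d n k"
    obtain m where m: "k = m+2" using assms le_Suc_ex by (metis add.commute)
    have pp: "per k p" using P by (simp add: per_def)
    have pl: "per k (2^(k-1))" using A by (simp add: per_def)
    define g where "g = gcd p (2^(k-1))"
    obtain x y where xy: "p * x = 2^(k-1) * y + g" using bezout_nat[of p "2^(k-1)"] p g_def by auto
    have pg: "per k g" using per_sub[OF per_mult[OF pl, of y] ] per_mult[OF pp, of x] xy
      by (simp add: mult.commute)
    have "g dvd 2^(k-1)" by (simp add: g_def)
    then obtain i where i: "i \<le> k-1" "g = 2^i" using divides_primepow_nat[of 2 g "k-1"] by auto
    have "g \<le> p" using p by (simp add: g_def)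
    then have "(2::nat)^i < 2^(k-1)" using p i(2) by linarith
    then have "i < k-1" using power_strict_increasing_iff[of "2::nat" i "k-1"] by simp
    then have "g dvd 2^(k-2)" using i m by (simp add: le_imp_power_dvd)
    then have "per k (2^(k-2))" using per_mult[OF pg] by (metis dvd_def mult.commute)
    then have "d (k+1 + 2^(k-2)) k = d (k+1) k" unfolding per_def using order_refl by blast
    moreover have "d (k+1 + 2^(k-2)) k = (d (k+1) k + 5) mod 10" using half_shift[OF assms, of "k+1"] by simp
    ultimately show False using a3[OF d_lt[of "k+1" k], of "d (k+1) k"] by simp
  qed
qed

end
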